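(* Let $n\geq 2$, let $\Omega$ be a region (nonempty open connected subset) of $\mathbb{C}$, and let $F:\Omega\to\mathbb{M}_n$ be analytic. If there is a $z_0\in\Omega$ such that $\|F(z)\|\leq\|F(z_0)\|$ for all $z\in\Omega$, then there exist constant $n\times n$ unitary matrices $U$ and $V$ and an analytic function $G:\Omega\to\mathbb{M}_{n-1}$ such that \[F(z)=U\begin{bmatrix}\|F(z_0)\| & 0\\ 0 & G(z)\end{bmatrix}V\quad\text{for all } z\in\Omega.\]
   Context: $\mathbb{M}_n$ denotes the set of $n\times n$ complex matrices (the paper takes $n>1$ throughout). $\|T\|$ denotes the operator norm of $T\in\mathbb{M}_n$ induced by the Euclidean norm on $\mathbb{C}^n$. A function $F:\Omega\to\mathbb{M}_n$ is analytic if it is complex differentiable with respect to this norm, equivalently if every entry of $F$ is analytic on $\Omega$. A matrix $A$ is unitary if $A^*A=AA^*=I$. *)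

theory Defs
  imports "HOL-Analysis.Analysis" "Jordan_Normal_Form.Matrix"
begin

definition vnorm :: "complex vec \<Rightarrow> real" where
  "vnorm v = sqrt (\<Sum>i<dim_vec v. (cmod (v $ i))\<^sup>2)"

definition opnorm :: "complex mat \<Rightarrow> real" where
  "opnorm A = Sup {vnorm (A *\<^sub>v x) | x. x \<in> carrier_vec (dim_col A) \<and> vnorm x = 1}"

definition adj :: "complex mat \<Rightarrow> complex mat" where
  "adj A = mat (dim_col A) (dim_row A) (\<lambda>(i,j). cnj (A $$ (j,i)))"

definition unitary_mat :: "nat \<Rightarrow> complex mat \<Rightarrow> bool" where
  "unitary_mat n A \<longleftrightarrow> A \<in> carrier_mat n n \<and> adj A * A = 1\<^sub>m n \<and> A * adj A = 1\<^sub>m n"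

definition mat_analytic_on :: "nat \<Rightarrow> (complex \<Rightarrow> complex mat) \<Rightarrow> complex set \<Rightarrow> bool" where
  "mat_analytic_on n F S \<longleftrightarrow> (\<forall>z\<in>S. F z \<in> carrier_mat n n) \<and>
     (\<forall>i<n. \<forall>j<n. (\<lambda>z. F z $$ (i,j)) analytic_on S)"

end

theory Submission
  imports Defs "HOL-Complex_Analysis.Complex_Analysis" "Jordan_Normal_Form.Schur_Decomposition"
begin

definition ip :: "nat \<Rightarrow> complex vec \<Rightarrow> complex vec \<Rightarrow> complex" where
  "ip n u v = (\<Sum>i<n. u $ i * cnj (v $ i))"

lemma vnorm_L2: "vnorm v = L2_set (\<lambda>i. cmod (v $ i)) {..<dim_vec v}"
  unfolding vnorm_def L2_set_def by simp

lemma vnorm_nonneg: "vnorm v \<ge> 0"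
  unfolding vnorm_L2 by simp

lemma vnorm_ip: assumes "dim_vec v = n" shows "ip n v v = of_real ((vnorm v)^2)"
proof -
  have "(vnorm v)^2 = (\<Sum>i<n. (cmod (v $ i))\<^sup>2)"
    unfolding vnorm_def using assms by (simp add: sum_nonneg)
  then show ?thesis unfolding ip_def
    by (auto simp: complex_norm_square[symmetric] intro!: sum.cong)
qed

lemma ip_cnj: "ip n v u = cnj (ip n u v)"
  unfolding ip_def by (simp add: mult.commute)

lemma vnorm_comp: "i < dim_vec v \<Longrightarrow> cmod (v $ i) \<le> vnorm v"
  unfolding vnorm_L2 by (rule member_le_L2_set) auto

lemma vnorm_le_sum: "vnorm v \<le> (\<Sum>i<dim_vec v. cmod (v $ i))"
  unfolding vnorm_L2 by (rule L2_set_le_sum) auto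

lemma vnorm_smult: "vnorm (c \<cdot>\<^sub>v v) = cmod c * vnorm v"
proof -
  have "L2_set (\<lambda>i. cmod ((c \<cdot>\<^sub>v v) $ i)) {..<dim_vec v} = L2_set (\<lambda>i. cmod c * cmod (v $ i)) {..<dim_vec v}"
    by (rule L2_set_cong) (auto simp: norm_mult)
  then show ?thesis unfolding vnorm_L2 by (simp add: L2_set_right_distrib)
qed

lemma vnorm_zero: assumes "v \<in> carrier_vec n" "vnorm v = 0" shows "v = 0\<^sub>v n"
proof -
  have "\<forall>i\<in>{..<dim_vec v}. cmod (v $ i) = 0"
    using assms(2) unfolding vnorm_L2 by (subst L2_set_eq_0_iff[symmetric]) auto
  then show ?thesis using assms(1) by (intro eq_vecI) auto
qed

lemma cauchy_schwarz:
  assumes "dim_vec u = n" "dim_vec y = n"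
  shows "cmod (ip n u y) \<le> vnorm u * vnorm y"
proof -
  have "cmod (ip n u y) \<le> (\<Sum>i<n. cmod (u $ i * cnj (y $ i)))"
    unfolding ip_def by (rule norm_sum)
  also have "\<dots> = (\<Sum>i<n. \<bar>cmod (u $ i)\<bar> * \<bar>cmod (y $ i)\<bar>)"
    by (simp add: norm_mult)
  also have "\<dots> \<le> L2_set (\<lambda>i. cmod (u $ i)) {..<n} * L2_set (\<lambda>i. cmod (y $ i)) {..<n}"
    by (rule L2_set_mult_ineq)
  finally show ?thesis unfolding vnorm_L2 using assms by simp
qed

lemma ip_expand:
  assumes "dim_vec u = n" "dim_vec y = n"
  shows "ip n (u - c \<cdot>\<^sub>v y) (u - c \<cdot>\<^sub>v y) =
     ip n u u - cnj c * ip n u y - c * ip n y u + c * cnj c * ip n y y"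
  unfolding ip_def using assms
  by (simp add: sum_subtractf sum.distrib sum_distrib_left algebra_simps)

lemma eq_case:
  assumes u: "u \<in> carrier_vec n" and y: "y \<in> carrier_vec n"
    and y1: "vnorm y = 1" and uM: "vnorm u \<le> M" and ipM: "ip n u y = of_real M"
  shows "u = M \<cdot>\<^sub>v y"
proof -
  have M0: "M \<ge> 0" using uM vnorm_nonneg order_trans by blast
  have du: "dim_vec u = n" and dy: "dim_vec y = n" using u y by auto
  have "ip n y u = of_real M" using ipM ip_cnj[of n y u] by simp
  then have "ip n (u - of_real M \<cdot>\<^sub>v y) (u - of_real M \<cdot>\<^sub>v y) = of_real ((vnorm u)^2 - M^2)"
    using ip_expand[OF du dy, of "of_real M"] ipM vnorm_ip[OF du] vnorm_ip[OF dy] y1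
    by (simp add: power2_eq_square)
  moreover have "dim_vec (u - of_real M \<cdot>\<^sub>v y) = n" using du dy by simp
  ultimately have "(vnorm (u - of_real M \<cdot>\<^sub>v y))^2 = (vnorm u)^2 - M^2"
    using vnorm_ip by (metis of_real_eq_iff)
  moreover have "(vnorm u)^2 \<le> M^2" using uM vnorm_nonneg by (simp add: power_mono)
  ultimately have "(vnorm (u - of_real M \<cdot>\<^sub>v y))^2 = 0"
    by (smt (verit) zero_le_power2)
  then have "vnorm (u - of_real M \<cdot>\<^sub>v y) = 0" by simp
  then have "u - of_real M \<cdot>\<^sub>v y = 0\<^sub>v n" using vnorm_zero u y by simp
  then have "\<And>i. i < n \<Longrightarrow> (u - of_real M \<cdot>\<^sub>v y) $ i = (0\<^sub>v n :: complex vec) $ i" by simp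
  then have "\<And>i. i < n \<Longrightarrow> u $ i = of_real M * y $ i" using u y by simp
  then show ?thesis using u y by (intro eq_vecI) auto
qed


lemma mv_index:
  assumes "A \<in> carrier_mat n n" "x \<in> carrier_vec n" "i < n"
  shows "(A *\<^sub>v x) $ i = (\<Sum>j<n. A $$ (i,j) * x $ j)"
  using assms by (simp add: scalar_prod_def lessThan_atLeast0)

lemma compact_box: "compact {f :: nat \<Rightarrow> complex. \<forall>i. f i \<in> (if i < n then cball 0 1 else {0})}"
proof -
  let ?K = "\<lambda>i::nat. (if i < n then cball (0::complex) 1 else {0})"
  have "compactin (product_topology (\<lambda>i. euclidean) UNIV) (PiE UNIV ?K)"
    by (subst compactin_PiE, rule disjI2) simp
  moreover have "PiE UNIV ?K = {f. \<forall>i. f i \<in> ?K i}"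
    by (simp add: PiE_def Pi_def extensional_def)
  ultimately show ?thesis by (simp add: euclidean_product_topology)
qed

lemma cont_coord: "continuous_on S (\<lambda>f::nat \<Rightarrow> complex. f i)"
  by (rule continuous_on_subset[OF continuous_on_product_coordinates]) simp

lemma opnorm_attained:
  assumes A: "A \<in> carrier_mat n n" and n: "n > 0"
  shows "\<exists>x\<in>carrier_vec n. vnorm x = 1 \<and> vnorm (A *\<^sub>v x) = opnorm A \<and>
     (\<forall>z\<in>carrier_vec n. vnorm z = 1 \<longrightarrow> vnorm (A *\<^sub>v z) \<le> opnorm A)"
proof -
  define h where "h = (\<lambda>f::nat \<Rightarrow> complex. sqrt (\<Sum>i<n. (cmod (f i))\<^sup>2))"
  define g where "g = (\<lambda>f::nat \<Rightarrow> complex. sqrt (\<Sum>i<n. (cmod (\<Sum>j<n. A $$ (i,j) * f j))\<^sup>2))"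
  define S where "S = {f :: nat \<Rightarrow> complex. \<forall>i. f i \<in> (if i < n then cball 0 1 else {0})} \<inter> {f. h f = 1}"
  have ch: "continuous_on UNIV h" unfolding h_def
    by (intro continuous_intros cont_coord)
  have cg: "continuous_on UNIV g" unfolding g_def
    by (intro continuous_intros cont_coord)
  have "closed {f. h f = 1}" by (rule closed_Collect_eq[OF ch continuous_on_const])
  then have cS: "compact S" unfolding S_def by (intro compact_Int_closed compact_box)
  have hv: "\<And>f. vnorm (vec n f) = h f" unfolding vnorm_def h_def by simp
  have gv: "vnorm (A *\<^sub>v vec n f) = g f" for f
  proof -
    have "(A *\<^sub>v vec n f) $ i = (\<Sum>j<n. A $$ (i,j) * f j)" if "i<n" for i
      using mv_index[OF A _ that, of "vec n f"] by simp
    then show ?thesis unfolding vnorm_def g_def using A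
      by (auto intro!: arg_cong[where f=sqrt] sum.cong)
  qed
  define e where "e = (\<lambda>i::nat. if i = 0 then (1::complex) else 0)"
  have "(\<Sum>i<n. (cmod (e i))\<^sup>2) = (\<Sum>i<n. if i = 0 then 1 else 0)"
    by (rule sum.cong) (auto simp: e_def)
  then have "h e = 1" unfolding h_def using n by simp
  then have "e \<in> S" unfolding S_def e_def using n by auto
  then have "S \<noteq> {}" by auto
  from continuous_attains_sup[OF cS this continuous_on_subset[OF cg]]
  obtain f where fS: "f \<in> S" and fmax: "\<And>f'. f' \<in> S \<Longrightarrow> g f' \<le> g f" by auto
  define x where "x = vec n f"
  have x: "x \<in> carrier_vec n" "vnorm x = 1" unfolding x_def using fS hv S_def by auto
  have "opnorm A = vnorm (A *\<^sub>v x)"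
    unfolding opnorm_def
  proof (rule cSup_eq_maximum)
    show "vnorm (A *\<^sub>v x) \<in> {vnorm (A *\<^sub>v x) |x. x \<in> carrier_vec (dim_col A) \<and> vnorm x = 1}"
      using x A by auto
  next
    fix r assume "r \<in> {vnorm (A *\<^sub>v x) |x. x \<in> carrier_vec (dim_col A) \<and> vnorm x = 1}"
    then obtain z where z: "z \<in> carrier_vec n" "vnorm z = 1" and r: "r = vnorm (A *\<^sub>v z)"
      using A by auto
    define fz where "fz = (\<lambda>i. if i < n then z $ i else 0)"
    have vz: "vec n fz = z" unfolding fz_def using z by auto
    have "fz \<in> S" unfolding S_def using vnorm_comp[of _ z] z hv[of fz] vz
      by (auto simp: fz_def)
    then have "g fz \<le> g f" by (rule fmax)
    then show "r \<le> vnorm (A *\<^sub>v x)" using r gv vz x_def by metis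
  qed
  moreover have "vnorm (A *\<^sub>v z) \<le> vnorm (A *\<^sub>v x)" if z: "z \<in> carrier_vec n" "vnorm z = 1" for z
  proof -
    define fz where "fz = (\<lambda>i. if i < n then z $ i else 0)"
    have vz: "vec n fz = z" unfolding fz_def using z by auto
    have "fz \<in> S" unfolding S_def using vnorm_comp[of _ z] z hv[of fz] vz
      by (auto simp: fz_def)
    then have "g fz \<le> g f" by (rule fmax)
    then show ?thesis using gv vz x_def by metis
  qed
  ultimately show ?thesis using x by auto
qed

lemma opnorm_bound:
  assumes A: "A \<in> carrier_mat n n" and n: "n > 0" and v: "v \<in> carrier_vec n"
  shows "vnorm (A *\<^sub>v v) \<le> opnorm A * vnorm v"
proof (cases "vnorm v = 0")
  case True
  then have "v = 0\<^sub>v n" using vnorm_zero v by auto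
  then have "A *\<^sub>v v = 0\<^sub>v n" using A by auto
  then show ?thesis using True by (simp add: vnorm_def)
next
  case False
  then have pos: "vnorm v > 0" using vnorm_nonneg[of v] by linarith
  define x where "x = complex_of_real (1 / vnorm v) \<cdot>\<^sub>v v"
  have x: "x \<in> carrier_vec n" "vnorm x = 1" unfolding x_def using v pos
    by (auto simp: vnorm_smult norm_divide)
  have "vnorm (A *\<^sub>v x) \<le> opnorm A" using opnorm_attained[OF A n] x by blast
  have "A *\<^sub>v x = complex_of_real (1 / vnorm v) \<cdot>\<^sub>v (A *\<^sub>v v)"
    unfolding x_def using A v by (simp add: mult_mat_vec)
  then have "vnorm (A *\<^sub>v x) = vnorm (A *\<^sub>v v) / vnorm v"
    using pos by (simp add: vnorm_smult norm_divide)
  then show ?thesis using \<open>vnorm (A *\<^sub>v x) \<le> opnorm A\<close> pos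
    by (simp add: field_simps) (metis mult.commute mult_right_mono less_imp_le)
qed


lemma mm_index:
  assumes "A \<in> carrier_mat n n" "B \<in> carrier_mat n n" "i < n" "j < n"
  shows "(A * B) $$ (i,j) = (\<Sum>k<n. A $$ (i,k) * B $$ (k,j))"
  using assms by (simp add: scalar_prod_def lessThan_atLeast0)

lemma adj_carrier[simp]: "A \<in> carrier_mat n m \<Longrightarrow> adj A \<in> carrier_mat m n"
  unfolding adj_def by auto

lemma adj_dims[simp]: "dim_row (adj A) = dim_col A" "dim_col (adj A) = dim_row A"
  unfolding adj_def by auto

lemma adj_index[simp]: "i < dim_col A \<Longrightarrow> j < dim_row A \<Longrightarrow> adj A $$ (i,j) = cnj (A $$ (j,i))"
  unfolding adj_def by auto

lemma sprodc_ip: "v \<in> carrier_vec n \<Longrightarrow> w \<in> carrier_vec n \<Longrightarrow> v \<bullet>c w = ip n v w"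
  unfolding ip_def scalar_prod_def by (simp add: lessThan_atLeast0)

lemma ip_smult: "dim_vec u = n \<Longrightarrow> dim_vec w = n \<Longrightarrow>
   ip n (a \<cdot>\<^sub>v u) (b \<cdot>\<^sub>v w) = a * cnj b * ip n u w"
  unfolding ip_def by (simp add: sum_distrib_left algebra_simps)

lemma vnorm_zero_vec: "vnorm (0\<^sub>v n) = 0"
  unfolding vnorm_def by simp

lemma unitary_completion:
  assumes x: "x \<in> carrier_vec n" and x1: "vnorm x = 1"
  shows "\<exists>W. unitary_mat n W \<and> col W 0 = x"
proof -
  have n: "n > 0"
  proof (rule ccontr)
    assume "\<not> n > 0"
    then have "n = 0" by simp
    then show False using x x1 unfolding vnorm_def by simp
  qed
  have x0: "x \<noteq> 0\<^sub>v n" using x1 vnorm_zero_vec by auto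
  interpret V: cof_vec_space n "TYPE(complex)" .
  define ws where "ws = basis_completion x"
  note bc = V.basis_completion[OF x x0, folded ws_def]
  define us where "us = gram_schmidt n ws"
  note gs = V.gram_schmidt_result[OF bc(2) bc(4) bc(5) us_def]
  have lus: "length us = n" using gs bc by simp
  have "ws = x # tl ws" using bc(6,7) n by (cases ws) auto
  then have "hd us = x" unfolding us_def using V.gram_schmidt_hd[OF x, of "tl ws"] by metis
  then have us0: "us ! 0 = x" using lus n by (cases us) auto
  have usc: "\<And>i. i < n \<Longrightarrow> us ! i \<in> carrier_vec n" using gs(3) lus by auto
  have uip: "\<And>i j. i < n \<Longrightarrow> j < n \<Longrightarrow> (ip n (us ! i) (us ! j) = 0) = (i \<noteq> j)"
    using corthogonalD[OF gs(2)] lus usc sprodc_ip by metis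
  define vs where "vs = map (\<lambda>v. complex_of_real (1 / vnorm v) \<cdot>\<^sub>v v) us"
  have lvs: "length vs = n" unfolding vs_def using lus by simp
  have vsi: "\<And>i. i < n \<Longrightarrow> vs ! i = complex_of_real (1 / vnorm (us ! i)) \<cdot>\<^sub>v us ! i"
    unfolding vs_def using lus by simp
  have vsc: "\<And>i. i < n \<Longrightarrow> vs ! i \<in> carrier_vec n" using vsi usc by simp
  have vip: "ip n (vs ! i) (vs ! j) = (if i = j then 1 else 0)" if ij: "i < n" "j < n" for i j
  proof (cases "i = j")
    case True
    have d: "dim_vec (us ! i) = n" using usc ij by auto
    have "ip n (us ! i) (us ! i) \<noteq> 0" using uip ij by auto
    then have nz: "vnorm (us ! i) \<noteq> 0" using vnorm_ip[OF d] by auto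
    show ?thesis using True vsi[OF ij(1)] ip_smult[OF d d] vnorm_ip[OF d] nz
      by (simp add: power2_eq_square)
  next
    case False
    have d: "dim_vec (us ! i) = n" "dim_vec (us ! j) = n" using usc ij by auto
    show ?thesis using False vsi ij ip_smult[OF d] uip by simp
  qed
  have vs0: "vs ! 0 = x" using vsi[OF n] us0 x1 by simp
  define W where "W = mat_of_cols n vs"
  have W: "W \<in> carrier_mat n n" unfolding W_def using lvs by auto
  have colW: "col W 0 = x" unfolding W_def using vs0 n lvs vsc[OF n] by (subst col_mat_of_cols) auto
  have Wij: "\<And>i j. i < n \<Longrightarrow> j < n \<Longrightarrow> W $$ (i,j) = vs ! j $ i"
    unfolding W_def using lvs by (simp add: mat_of_cols_def)
  have AW: "adj W * W = 1\<^sub>m n"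
  proof (rule eq_matI)
    fix i j assume ij: "i < dim_row (1\<^sub>m n :: complex mat)" "j < dim_col (1\<^sub>m n :: complex mat)"
    then have ij': "i < n" "j < n" by auto
    have "(adj W * W) $$ (i,j) = (\<Sum>k<n. adj W $$ (i,k) * W $$ (k,j))"
      using mm_index[OF adj_carrier[OF W] W ij'] .
    also have "\<dots> = (\<Sum>k<n. vs ! j $ k * cnj (vs ! i $ k))"
      using W ij' Wij by (intro sum.cong) auto
    also have "\<dots> = ip n (vs ! j) (vs ! i)" unfolding ip_def ..
    also have "\<dots> = (1\<^sub>m n :: complex mat) $$ (i,j)" using vip ij' by auto
    finally show "(adj W * W) $$ (i,j) = (1\<^sub>m n :: complex mat) $$ (i,j)" .
  qed (use W in auto)
  have "W * adj W = 1\<^sub>m n" using mat_mult_left_right_inverse[OF adj_carrier[OF W] W AW] .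
  then have "unitary_mat n W" unfolding unitary_mat_def using W AW by auto
  then show ?thesis using colW by auto
qed


lemma adj_adj: "A \<in> carrier_mat n m \<Longrightarrow> adj (adj A) = A"
  by (intro eq_matI) auto

lemma ip_smult_left: "ip n (a \<cdot>\<^sub>v u) w = a * ip n u w" if "dim_vec u = n"
  using that unfolding ip_def by (simp add: sum_distrib_left algebra_simps)

lemma vnorm_unit: assumes "n > 0" shows "vnorm (unit_vec n 0) = 1"
proof -
  have "(\<Sum>i<n. (cmod (unit_vec n 0 $ i))\<^sup>2) = (\<Sum>i<n. if i = 0 then 1 else 0)"
    by (rule sum.cong) auto
  then show ?thesis unfolding vnorm_def using assms by simp
qed

lemma adj_ip:
  assumes A: "A \<in> carrier_mat n n" and v: "v \<in> carrier_vec n" and y: "y \<in> carrier_vec n"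
  shows "ip n (A *\<^sub>v v) y = ip n v (adj A *\<^sub>v y)"
proof -
  have "ip n (A *\<^sub>v v) y = (\<Sum>i<n. (\<Sum>j<n. A $$ (i,j) * v $ j) * cnj (y $ i))"
    unfolding ip_def using mv_index[OF A v] by (intro sum.cong) auto
  also have "\<dots> = (\<Sum>i<n. \<Sum>j<n. v $ j * (A $$ (i,j) * cnj (y $ i)))"
    by (simp add: sum_distrib_right sum_distrib_left algebra_simps)
  also have "\<dots> = (\<Sum>j<n. \<Sum>i<n. v $ j * (A $$ (i,j) * cnj (y $ i)))"
    by (rule sum.swap)
  also have "\<dots> = (\<Sum>j<n. v $ j * cnj (\<Sum>i<n. adj A $$ (j,i) * y $ i))"
    using A by (simp add: sum_distrib_left)
  also have "\<dots> = ip n v (adj A *\<^sub>v y)"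
    unfolding ip_def using mv_index[OF adj_carrier[OF A] y] by (intro sum.cong) auto
  finally show ?thesis .
qed

lemma unitary_orth:
  assumes U: "unitary_mat n U" and ij: "i < n" "j < n"
  shows "(\<Sum>k<n. cnj (U $$ (k,i)) * U $$ (k,j)) = (if i = j then 1 else 0)"
proof -
  have Uc: "U \<in> carrier_mat n n" and UU: "adj U * U = 1\<^sub>m n" using U unfolding unitary_mat_def by auto
  have "(adj U * U) $$ (i,j) = (\<Sum>k<n. adj U $$ (i,k) * U $$ (k,j))"
    using mm_index[OF adj_carrier[OF Uc] Uc ij] .
  also have "\<dots> = (\<Sum>k<n. cnj (U $$ (k,i)) * U $$ (k,j))"
    using Uc ij by (intro sum.cong) auto
  finally show ?thesis using UU ij by simp
qed

lemma triple_index: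
  assumes U: "U \<in> carrier_mat n n" and A: "A \<in> carrier_mat n n" and W: "W \<in> carrier_mat n n"
    and ij: "i < n" "j < n"
  shows "(adj U * A * W) $$ (i,j) = (\<Sum>k<n. \<Sum>l<n. cnj (U $$ (k,i)) * A $$ (k,l) * W $$ (l,j))"
proof -
  have "adj U * A * W = adj U * (A * W)" using U A W by (intro assoc_mult_mat) auto
  then have "(adj U * A * W) $$ (i,j) = (\<Sum>k<n. adj U $$ (i,k) * (A * W) $$ (k,j))"
    using mm_index[OF adj_carrier[OF U] _ ij, of "A * W"] A W by simp
  also have "\<dots> = (\<Sum>k<n. cnj (U $$ (k,i)) * (\<Sum>l<n. A $$ (k,l) * W $$ (l,j)))"
    using U A W ij by (intro sum.cong refl) (subst mm_index[OF A W _ ij(2)], auto)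
  finally show ?thesis by (simp add: sum_distrib_left mult.assoc)
qed


theorem theorem4:
  fixes n :: nat and \<Omega> :: "complex set" and F :: "complex \<Rightarrow> complex mat" and z0 :: complex
  assumes "n \<ge> 2"
    and "open \<Omega>" and "connected \<Omega>" and "\<Omega> \<noteq> {}"
    and "mat_analytic_on n F \<Omega>"
    and "z0 \<in> \<Omega>"
    and "\<forall>z\<in>\<Omega>. opnorm (F z) \<le> opnorm (F z0)"
  shows "\<exists>U V G. unitary_mat n U \<and> unitary_mat n V \<and> mat_analytic_on (n - 1) G \<Omega> \<and>
           (\<forall>z\<in>\<Omega>. F z = U * four_block_mat (mat 1 1 (\<lambda>_. complex_of_real (opnorm (F z0))))
                                         (0\<^sub>m 1 (n - 1)) (0\<^sub>m (n - 1) 1) (G z) * V)"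
proof -
  have n: "n > 0" using assms(1) by simp
  have Fc: "\<And>z. z \<in> \<Omega> \<Longrightarrow> F z \<in> carrier_mat n n" using assms(5) unfolding mat_analytic_on_def by auto
  have Fa: "\<And>i j. i < n \<Longrightarrow> j < n \<Longrightarrow> (\<lambda>z. F z $$ (i,j)) analytic_on \<Omega>"
    using assms(5) unfolding mat_analytic_on_def by auto
  have z0: "z0 \<in> \<Omega>" by fact
  define M where "M = opnorm (F z0)"
  have FM: "\<And>z. z \<in> \<Omega> \<Longrightarrow> opnorm (F z) \<le> M" using assms(7) M_def by auto
  obtain x where x: "x \<in> carrier_vec n" "vnorm x = 1" "vnorm (F z0 *\<^sub>v x) = M"
    using opnorm_attained[OF Fc[OF z0] n] M_def by blast
  have M0: "M \<ge> 0" using x(3) vnorm_nonneg by metis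
  have Fxc: "\<And>z. z \<in> \<Omega> \<Longrightarrow> F z *\<^sub>v x \<in> carrier_vec n" using Fc x(1) by (metis mult_mat_vec_carrier)
  obtain y where y: "y \<in> carrier_vec n" "vnorm y = 1" "F z0 *\<^sub>v x = M \<cdot>\<^sub>v y"
  proof (cases "M = 0")
    case True
    have "F z0 *\<^sub>v x = 0\<^sub>v n" using vnorm_zero[OF Fxc[OF z0]] x True by simp
    moreover have "0\<^sub>v n = (0::complex) \<cdot>\<^sub>v unit_vec n 0" by (intro eq_vecI) auto
    ultimately show ?thesis using that[of "unit_vec n 0"] vnorm_unit[OF n] True by simp
  next
    case False
    then have Mp: "M > 0" using M0 by simp
    define y where "y = complex_of_real (1/M) \<cdot>\<^sub>v (F z0 *\<^sub>v x)"
    have yc: "y \<in> carrier_vec n" using Fxc[OF z0] by (simp add: y_def)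
    have y1: "vnorm y = 1" unfolding y_def using vnorm_smult x(3) Mp by (simp add: norm_divide)
    have "F z0 *\<^sub>v x = M \<cdot>\<^sub>v y" using Fxc[OF z0] Mp
      by (intro eq_vecI) (auto simp: y_def)
    then show ?thesis using that yc y1 by blast
  qed
  define f where "f = (\<lambda>z. \<Sum>i<n. (\<Sum>j<n. F z $$ (i,j) * x $ j) * cnj (y $ i))"
  have f_ip: "f z = ip n (F z *\<^sub>v x) y" if z: "z \<in> \<Omega>" for z
    unfolding f_def ip_def using mv_index[OF Fc[OF z] x(1)] by (intro sum.cong) auto
  have fa: "f analytic_on \<Omega>" unfolding f_def
    by (auto intro!: analytic_intros Fa)
  have fb: "norm (f z) \<le> M" if z: "z \<in> \<Omega>" for z
  proof -
    have "norm (f z) \<le> vnorm (F z *\<^sub>v x) * vnorm y"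
      unfolding f_ip[OF z] using Fxc[OF z] y(1) by (intro cauchy_schwarz) (auto simp del: dim_mult_mat_vec)
    also have "\<dots> \<le> opnorm (F z) * vnorm x" using opnorm_bound[OF Fc[OF z] n x(1)] y(2) by simp
    also have "\<dots> \<le> M" using FM[OF z] x(2) by simp
    finally show ?thesis .
  qed
  have fz0: "f z0 = M"
    using f_ip[OF z0] y(3) ip_smult_left[of y n] vnorm_ip[of y n] y(1,2) by simp
  have "f constant_on \<Omega>"
    by (rule maximum_modulus_principle[OF analytic_imp_holomorphic[OF fa] assms(2,3) assms(2) order_refl z0])
      (use fb fz0 M0 in auto)
  then have fM: "\<And>z. z \<in> \<Omega> \<Longrightarrow> f z = M" using fz0 z0 unfolding constant_on_def by metis
  have Fx: "F z *\<^sub>v x = M \<cdot>\<^sub>v y" if z: "z \<in> \<Omega>" for z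
  proof (rule eq_case[OF Fxc[OF z] y(1) y(2)])
    show "vnorm (F z *\<^sub>v x) \<le> M" using opnorm_bound[OF Fc[OF z] n x(1)] x(2) FM[OF z] by simp
    show "ip n (F z *\<^sub>v x) y = complex_of_real M" using f_ip[OF z] fM[OF z] by simp
  qed
  have Fy: "adj (F z) *\<^sub>v y = M \<cdot>\<^sub>v x" if z: "z \<in> \<Omega>" for z
  proof -
    define w where "w = adj (F z) *\<^sub>v y"
    have wc: "w \<in> carrier_vec n" unfolding w_def using adj_carrier[OF Fc[OF z]] y(1) by (metis mult_mat_vec_carrier)
    have ipw: "ip n w x = complex_of_real M"
    proof -
      have "ip n w x = cnj (ip n x w)" by (rule ip_cnj)
      also have "ip n x w = ip n (F z *\<^sub>v x) y" unfolding w_def using adj_ip[OF Fc[OF z] x(1) y(1)] by simp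
      finally show ?thesis by (simp add: f_ip[OF z, symmetric] fM[OF z])
    qed
    have "complex_of_real ((vnorm w)^2) = ip n w w" using vnorm_ip[of w n] wc by simp
    also have "\<dots> = ip n (F z *\<^sub>v w) y" unfolding w_def using adj_ip[OF Fc[OF z] wc y(1)] w_def by simp
    finally have "(vnorm w)^2 = cmod (ip n (F z *\<^sub>v w) y)" by (metis norm_of_real abs_power2)
    also have "\<dots> \<le> vnorm (F z *\<^sub>v w) * vnorm y" using Fc[OF z] wc y(1) by (intro cauchy_schwarz) (auto simp del: dim_mult_mat_vec)
    also have "\<dots> \<le> opnorm (F z) * vnorm w" using opnorm_bound[OF Fc[OF z] n wc] y(2) by simp
    also have "\<dots> \<le> M * vnorm w" using FM[OF z] vnorm_nonneg by (simp add: mult_right_mono)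
    finally have "(vnorm w)^2 \<le> M * vnorm w" .
    then have "vnorm w \<le> M" using vnorm_nonneg[of w] M0
      by (cases "vnorm w = 0") (auto simp: power2_eq_square)
    from eq_case[OF wc x(1) x(2) this ipw] show ?thesis unfolding w_def .
  qed
  obtain U where U: "unitary_mat n U" "col U 0 = y" using unitary_completion[OF y(1,2)] by blast
  obtain W where W: "unitary_mat n W" "col W 0 = x" using unitary_completion[OF x(1,2)] by blast
  have Uc: "U \<in> carrier_mat n n" and Wc: "W \<in> carrier_mat n n" using U W unfolding unitary_mat_def by auto
  have U0: "\<And>k. k < n \<Longrightarrow> U $$ (k,0) = y $ k" using U(2) Uc n by (metis carrier_matD index_col)
  have W0: "\<And>k. k < n \<Longrightarrow> W $$ (k,0) = x $ k" using W(2) Wc n by (metis carrier_matD index_col)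
  define G where "G = (\<lambda>z. mat (n-1) (n-1) (\<lambda>(i,j). \<Sum>k<n. \<Sum>l<n. cnj (U $$ (k,Suc i)) * F z $$ (k,l) * W $$ (l,Suc j)))"
  define Mm where "Mm = mat 1 1 (\<lambda>_. complex_of_real M)"
  have B: "adj U * F z * W = four_block_mat Mm (0\<^sub>m 1 (n-1)) (0\<^sub>m (n-1) 1) (G z)" if z: "z \<in> \<Omega>" for z
  proof (rule eq_matI)
    show "dim_row (adj U * F z * W) = dim_row (four_block_mat Mm (0\<^sub>m 1 (n-1)) (0\<^sub>m (n-1) 1) (G z))"
      using Uc n by (simp add: Mm_def G_def)
    show "dim_col (adj U * F z * W) = dim_col (four_block_mat Mm (0\<^sub>m 1 (n-1)) (0\<^sub>m (n-1) 1) (G z))"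
      using Wc n by (simp add: Mm_def G_def)
    fix i j assume "i < dim_row (four_block_mat Mm (0\<^sub>m 1 (n-1)) (0\<^sub>m (n-1) 1) (G z))"
      "j < dim_col (four_block_mat Mm (0\<^sub>m 1 (n-1)) (0\<^sub>m (n-1) 1) (G z))"
    then have ij: "i < n" "j < n" using n by (auto simp: Mm_def G_def)
    define T where "T = (\<Sum>k<n. \<Sum>l<n. cnj (U $$ (k,i)) * F z $$ (k,l) * W $$ (l,j))"
    have LT: "(adj U * F z * W) $$ (i,j) = T" unfolding T_def by (rule triple_index[OF Uc Fc[OF z] Wc ij])
    have Tcol: "T = (\<Sum>k<n. cnj (U $$ (k,i)) * (\<Sum>l<n. F z $$ (k,l) * W $$ (l,j)))"
      unfolding T_def by (simp add: sum_distrib_left mult.assoc)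
    have Trow: "T = (\<Sum>l<n. (\<Sum>k<n. cnj (U $$ (k,i)) * F z $$ (k,l)) * W $$ (l,j))"
      unfolding T_def by (subst sum.swap) (simp add: sum_distrib_right)
    have RHS: "four_block_mat Mm (0\<^sub>m 1 (n-1)) (0\<^sub>m (n-1) 1) (G z) $$ (i,j) =
      (if i = 0 then (if j = 0 then complex_of_real M else 0) else if j = 0 then 0 else
        (\<Sum>k<n. \<Sum>l<n. cnj (U $$ (k,i)) * F z $$ (k,l) * W $$ (l,j)))"
      using ij n by (auto simp: Mm_def G_def)
    show "(adj U * F z * W) $$ (i,j) = four_block_mat Mm (0\<^sub>m 1 (n-1)) (0\<^sub>m (n-1) 1) (G z) $$ (i,j)"
    proof (cases "j = 0")
      case True
      have "\<And>k. k < n \<Longrightarrow> (\<Sum>l<n. F z $$ (k,l) * W $$ (l,j)) = M * U $$ (k,0)"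
      proof -
        fix k assume k: "k < n"
        have "(\<Sum>l<n. F z $$ (k,l) * W $$ (l,j)) = (F z *\<^sub>v x) $ k"
          using mv_index[OF Fc[OF z] x(1) k] True W0 by (auto intro: sum.cong)
        also have "\<dots> = M * U $$ (k,0)" using Fx[OF z] k y(1) U0 by simp
        finally show "(\<Sum>l<n. F z $$ (k,l) * W $$ (l,j)) = M * U $$ (k,0)" .
      qed
      then have "T = (\<Sum>k<n. M * (cnj (U $$ (k,i)) * U $$ (k,0)))"
        unfolding Tcol by (intro sum.cong) auto
      also have "\<dots> = M * (if i = 0 then 1 else 0)"
        using unitary_orth[OF U(1) ij(1) n] by (simp add: sum_distrib_left[symmetric])
      finally show ?thesis using LT RHS True by simp
    next
      case False
      show ?thesis
      proof (cases "i = 0")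
        case True
        have "\<And>l. l < n \<Longrightarrow> (\<Sum>k<n. cnj (U $$ (k,i)) * F z $$ (k,l)) = M * cnj (W $$ (l,0))"
        proof -
          fix l assume l: "l < n"
          have "(\<Sum>k<n. cnj (U $$ (k,i)) * F z $$ (k,l)) = cnj (\<Sum>k<n. adj (F z) $$ (l,k) * y $ k)"
            using Fc[OF z] l True U0 by (auto intro: sum.cong simp: mult.commute)
          also have "\<dots> = cnj ((adj (F z) *\<^sub>v y) $ l)"
            using mv_index[OF adj_carrier[OF Fc[OF z]] y(1) l] by simp
          also have "\<dots> = M * cnj (W $$ (l,0))" using Fy[OF z] l x(1) W0 by simp
          finally show "(\<Sum>k<n. cnj (U $$ (k,i)) * F z $$ (k,l)) = M * cnj (W $$ (l,0))" .
        qed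
        then have "T = (\<Sum>l<n. M * (cnj (W $$ (l,0)) * W $$ (l,j)))"
          unfolding Trow by (intro sum.cong) auto
        also have "\<dots> = M * (if 0 = j then 1 else 0)"
          using unitary_orth[OF W(1) n ij(2)] by (simp add: sum_distrib_left[symmetric])
        finally show ?thesis using LT RHS True False by simp
      next
        case False2: False
        show ?thesis using LT RHS False False2 T_def by simp
      qed
    qed
  qed
  have UU: "U * adj U = 1\<^sub>m n" and WW: "W * adj W = 1\<^sub>m n" and WW': "adj W * W = 1\<^sub>m n"
    using U W unfolding unitary_mat_def by auto
  have Feq: "F z = U * four_block_mat Mm (0\<^sub>m 1 (n-1)) (0\<^sub>m (n-1) 1) (G z) * adj W" if z: "z \<in> \<Omega>" for z
  proof -
    have aU: "adj U \<in> carrier_mat n n" and aW: "adj W \<in> carrier_mat n n" using Uc Wc by auto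
    have UF: "adj U * F z \<in> carrier_mat n n" using aU Fc[OF z] by (rule mult_carrier_mat)
    have X: "adj U * F z * W \<in> carrier_mat n n" using UF Wc by (rule mult_carrier_mat)
    have "U * (adj U * F z * W) * adj W = U * ((adj U * F z * W) * adj W)"
      by (rule assoc_mult_mat[OF Uc X aW])
    also have "(adj U * F z * W) * adj W = (adj U * F z) * (W * adj W)"
      by (rule assoc_mult_mat[OF UF Wc aW])
    also have "\<dots> = adj U * F z" using WW right_mult_one_mat[OF UF] by simp
    also have "U * (adj U * F z) = (U * adj U) * F z"
      by (rule assoc_mult_mat[OF Uc aU Fc[OF z], symmetric])
    also have "\<dots> = F z" using UU left_mult_one_mat[OF Fc[OF z]] by simp
    finally show ?thesis using B[OF z] by simp
  qed
  have V: "unitary_mat n (adj W)"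
    unfolding unitary_mat_def using Wc WW WW' adj_adj[OF Wc] by auto
  have GA: "mat_analytic_on (n - 1) G \<Omega>"
    unfolding mat_analytic_on_def
  proof (intro conjI ballI allI impI)
    show "\<And>z. G z \<in> carrier_mat (n-1) (n-1)" unfolding G_def by auto
    fix i j assume ij: "i < n - 1" "j < n - 1"
    have "(\<lambda>z. G z $$ (i,j)) = (\<lambda>z. \<Sum>k<n. \<Sum>l<n. cnj (U $$ (k,Suc i)) * F z $$ (k,l) * W $$ (l,Suc j))"
      unfolding G_def using ij by simp
    moreover have "(\<lambda>z. \<Sum>k<n. \<Sum>l<n. cnj (U $$ (k,Suc i)) * F z $$ (k,l) * W $$ (l,Suc j)) analytic_on \<Omega>"
      by (auto intro!: analytic_intros Fa)
    ultimately show "(\<lambda>z. G z $$ (i,j)) analytic_on \<Omega>" by simp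
  qed
  show ?thesis
    using U(1) V GA Feq unfolding Mm_def M_def by blast
qed

end
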